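(* Fix $\delta>0$ and a sequence $(T_N)_N$ with $T_N\in2\mathbb N$, $T_N\le N$, $T_N\to\infty$ and $T_N-\frac{\log N}{c_\delta}\to-\infty$. Then for every $x\in\mathbb R$, $$\lim_{N\to\infty}\mathcal P_{\delta,T_N}\Big(\frac{Y_N}{\sqrt{2e^\delta Q^1_{T_N}(\phi(\delta,T_N))\,N}}\le x\Big)=P(\mathcal N(0,1)\le x),$$ where $Y_N:=\sum_{i=1}^N\varepsilon_i$.
   Context: $(S_n)$ is the simple symmetric random walk on $\mathbb Z$ started at $0$ with law $\mathbf P$. For $T\in2\mathbb N$, $\tau_1^T:=\inf\{n>0:S_n\in T\mathbb Z\}$, $\varepsilon^T_1:=S_{\tau^T_1}/T$, $q^j_T(n):=\mathbf P(\tau^T_1=n,\varepsilon^T_1=j)$ for $j\in\{0,1\}$, $Q^1_T(\lambda):=\sum_n e^{-\lambda n}q^1_T(n)$, $Q_T(\lambda):=\mathbf E[e^{-\lambda\tau^T_1}]$. For $\delta>0$, $\phi(\delta,T)$ is the unique real solution $\lambda$ of $Q_T(\lambda)=e^{-\delta}$; $c_\delta:=\frac\delta2+\log\sqrt{2-e^{-\delta}}$. Under $\mathcal P_{\delta,T}$, $(\xi_i,\varepsilon_i)_{i\ge1}$ are i.i.d. with $\mathcal P_{\delta,T}((\xi_1,\varepsilon_1)=(n,j))=e^\delta q^{|j|}_T(n)e^{-\phi(\delta,T)n}$, $n\in\mathbb N$, $j\in\{-1,0,1\}$. $\mathcal N(0,1)$ is the standard normal law. *)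

theory Defs
  imports "HOL-Probability.Probability"
begin

text \<open>Paths of the simple symmetric random walk of length n (each has probability 2^-n).\<close>
definition srw_paths :: "nat \<Rightarrow> int list set" where
  "srw_paths n = {s. length s = n \<and> set s \<subseteq> {-1, 1}}"

definition Spos :: "int list \<Rightarrow> nat \<Rightarrow> int" where
  "Spos s k = sum_list (take k s)"

text \<open>q T j n = P(tau_1^T = n, eps_1^T = j), for j an integer.\<close>
definition qT :: "nat \<Rightarrow> int \<Rightarrow> nat \<Rightarrow> real" where
  "qT T j n = (if n = 0 then 0 else
     real (card {s \<in> srw_paths n. (\<forall>k\<in>{1..<n}. \<not> (int T dvd Spos s k)) \<and> Spos s n = j * int T})
     / 2 ^ n)"

text \<open>P(tau_1^T = n).\<close>
definition ptau :: "nat \<Rightarrow> nat \<Rightarrow> real" where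
  "ptau T n = (if n = 0 then 0 else
     real (card {s \<in> srw_paths n. (\<forall>k\<in>{1..<n}. \<not> (int T dvd Spos s k)) \<and> int T dvd Spos s n})
     / 2 ^ n)"

definition Q1 :: "nat \<Rightarrow> real \<Rightarrow> real" where
  "Q1 T l = (\<Sum>n. exp (- l * real n) * qT T 1 n)"

text \<open>phi(delta,T): the unique real lambda with E[exp(-lambda tau)] = exp(-delta)
  (the series converging to exp(-delta)).\<close>
definition phi :: "real \<Rightarrow> nat \<Rightarrow> real" where
  "phi \<delta> T = (THE l. (\<lambda>n. exp (- l * real n) * ptau T n) sums exp (- \<delta>))"

definition c_delta :: "real \<Rightarrow> real" where
  "c_delta \<delta> = \<delta> / 2 + ln (sqrt (2 - exp (- \<delta>)))"

text \<open>The law of (xi_1, eps_1) under P_{delta,T}.\<close>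
definition step_pmf :: "real \<Rightarrow> nat \<Rightarrow> (nat \<times> int) pmf" where
  "step_pmf \<delta> T = embed_pmf (\<lambda>(n, j).
     if n \<ge> 1 \<and> j \<in> {-1, 0, 1}
     then exp \<delta> * qT T \<bar>j\<bar> n * exp (- phi \<delta> T * real n) else 0)"

definition Y_law :: "real \<Rightarrow> nat \<Rightarrow> nat \<Rightarrow> int pmf" where
  "Y_law \<delta> T N = map_pmf (\<lambda>f. \<Sum>i\<in>{1..N}. snd (f i))
     (Pi_pmf {1..N} (0, 0) (\<lambda>_. step_pmf \<delta> T))"

end

theory Submission
  imports Defs
begin


definition Wset :: "nat \<Rightarrow> (int \<Rightarrow> bool) \<Rightarrow> int \<Rightarrow> nat \<Rightarrow> int list set" where
  "Wset T P x n = {s \<in> srw_paths n. (\<forall>k\<in>{1..<n}. \<not> int T dvd (x + Spos s k)) \<and> P (x + Spos s n)}"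

definition cW :: "nat \<Rightarrow> (int \<Rightarrow> bool) \<Rightarrow> int \<Rightarrow> nat \<Rightarrow> real" where
  "cW T P x n = real (card (Wset T P x n))"

definition VW :: "nat \<Rightarrow> (int \<Rightarrow> bool) \<Rightarrow> int \<Rightarrow> nat \<Rightarrow> real" where
  "VW T P y n = (if int T dvd y then (if n = 0 \<and> P y then 1 else 0) else cW T P y n)"

lemma finite_srw_paths: "finite (srw_paths n)"
proof -
  have "srw_paths n = {xs. set xs \<subseteq> {-1,1} \<and> length xs = n}" by (auto simp: srw_paths_def)
  then show ?thesis by (simp add: finite_lists_length_eq)
qed

lemma card_srw_paths: "card (srw_paths n) = 2 ^ n"
proof -
  have "srw_paths n = {xs. set xs \<subseteq> {-1,1} \<and> length xs = n}" by (auto simp: srw_paths_def)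
  then show ?thesis by (simp add: card_lists_length_eq numeral_2_eq_2)
qed

lemma cW_le: "cW T P x n \<le> 2 ^ n"
proof -
  have "card (Wset T P x n) \<le> card (srw_paths n)"
    by (rule card_mono[OF finite_srw_paths]) (auto simp: Wset_def)
  then show ?thesis unfolding cW_def card_srw_paths
    by (metis of_nat_le_iff of_nat_numeral of_nat_power)
qed

lemma cW_nonneg: "cW T P x n \<ge> 0" by (simp add: cW_def)

lemma VW_le: "\<bar>VW T P x n\<bar> \<le> 2 ^ n"
  using cW_le[of T P x n] cW_nonneg[of T P x n] by (auto simp: VW_def)

lemma Spos_Cons_Suc: "Spos (a # s) (Suc k) = a + Spos s k"
  by (simp add: Spos_def)

lemma Spos_0: "Spos s 0 = 0" by (simp add: Spos_def)

lemma srw_paths_Suc: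
  "srw_paths (Suc n) = (\<lambda>s. 1 # s) ` srw_paths n \<union> (\<lambda>s. (-1) # s) ` srw_paths n"
proof (rule set_eqI)
  fix s show "s \<in> srw_paths (Suc n) \<longleftrightarrow> s \<in> (\<lambda>s. 1 # s) ` srw_paths n \<union> (\<lambda>s. (-1) # s) ` srw_paths n"
    by (cases s) (auto simp: srw_paths_def)
qed

definition Wa :: "nat \<Rightarrow> (int \<Rightarrow> bool) \<Rightarrow> int \<Rightarrow> nat \<Rightarrow> int list set" where
  "Wa T P y n = {s \<in> srw_paths n. (n \<ge> 1 \<longrightarrow> \<not> int T dvd y) \<and>
      (\<forall>k\<in>{1..<n}. \<not> int T dvd (y + Spos s k)) \<and> P (y + Spos s n)}"

lemma Wset_Suc: "Wset T P x (Suc n) = (\<lambda>s. 1 # s) ` Wa T P (x+1) n \<union> (\<lambda>s. (-1) # s) ` Wa T P (x-1) n"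
proof (rule set_eqI)
  fix s
  show "s \<in> Wset T P x (Suc n) \<longleftrightarrow> s \<in> (\<lambda>s. 1 # s) ` Wa T P (x+1) n \<union> (\<lambda>s. (-1) # s) ` Wa T P (x-1) n"
  proof (cases s)
    case Nil then show ?thesis by (auto simp: Wset_def Wa_def srw_paths_def)
  next
    case (Cons a s')
    have k: "(\<forall>k\<in>{1..<Suc n}. \<not> int T dvd (x + Spos (a # s') k)) \<longleftrightarrow>
          ((n \<ge> 1 \<longrightarrow> \<not> int T dvd (x + a)) \<and> (\<forall>k\<in>{1..<n}. \<not> int T dvd (x + a + Spos s' k)))"
    proof
      assume H: "\<forall>k\<in>{1..<Suc n}. \<not> int T dvd (x + Spos (a # s') k)"
      show "(n \<ge> 1 \<longrightarrow> \<not> int T dvd (x + a)) \<and> (\<forall>k\<in>{1..<n}. \<not> int T dvd (x + a + Spos s' k))"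
      proof safe
        assume "n \<ge> 1" "int T dvd x + a"
        with H[rule_format, of 1] show False by (simp add: Spos_def)
      next
        fix k assume "k \<in> {1..<n}" "int T dvd x + a + Spos s' k"
        with H[rule_format, of "Suc k"] show False by (simp add: Spos_Cons_Suc add.assoc)
      qed
    next
      assume H: "(n \<ge> 1 \<longrightarrow> \<not> int T dvd (x + a)) \<and> (\<forall>k\<in>{1..<n}. \<not> int T dvd (x + a + Spos s' k))"
      show "\<forall>k\<in>{1..<Suc n}. \<not> int T dvd (x + Spos (a # s') k)"
      proof
        fix k assume kk: "k \<in> {1..<Suc n}"
        then obtain j where j: "k = Suc j" by (cases k) auto
        show "\<not> int T dvd (x + Spos (a # s') k)"
        proof (cases j)
          case 0 then show ?thesis using H kk j by (simp add: Spos_def)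
        next
          case (Suc i) then show ?thesis using H kk j by (simp add: Spos_Cons_Suc add.assoc)
        qed
      qed
    qed
    have e: "x + Spos (a # s') (Suc n) = x + a + Spos s' n" by (simp add: Spos_Cons_Suc)
    show ?thesis using Cons
      apply (simp only: Wset_def Wa_def mem_Collect_eq k e)
      apply (auto simp: srw_paths_def)
      done
  qed
qed

lemma Wa_card: "real (card (Wa T P y n)) = VW T P y n"
proof (cases "int T dvd y")
  case True
  show ?thesis
  proof (cases n)
    case 0
    have "Wa T P y n = (if P y then {[]} else {})"
      using 0 by (auto simp: Wa_def srw_paths_def Spos_def)
    then show ?thesis using True 0 by (simp add: VW_def)
  next
    case (Suc m)
    then have "Wa T P y n = {}" using True by (auto simp: Wa_def)
    then show ?thesis using True Suc by (simp add: VW_def)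
  qed
next
  case False
  then have "Wa T P y n = Wset T P y n" by (auto simp: Wa_def Wset_def)
  then show ?thesis using False by (simp add: VW_def cW_def)
qed

lemma cW_Suc: "cW T P x (Suc n) = VW T P (x+1) n + VW T P (x-1) n"
proof -
  have fin: "finite (Wa T P y n)" for y
    by (rule finite_subset[OF _ finite_srw_paths[of n]]) (auto simp: Wa_def)
  have "card (Wset T P x (Suc n)) = card ((\<lambda>s. 1 # s) ` Wa T P (x+1) n) + card ((\<lambda>s. (-1) # s) ` Wa T P (x-1) n)"
    unfolding Wset_Suc by (rule card_Un_disjoint) (auto simp: fin)
  also have "\<dots> = card (Wa T P (x+1) n) + card (Wa T P (x-1) n)"
    by (simp add: card_image inj_on_def)
  finally show ?thesis unfolding cW_def using Wa_card[of T P] by simp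
qed



lemma sinh_rec: "sinh (a + \<theta>) = 2 * cosh \<theta> * sinh a - sinh (a - \<theta>)" for a \<theta> :: real
  by (simp add: sinh_add sinh_diff algebra_simps)

lemma lin_rec:
  fixes g :: "int \<Rightarrow> real" and \<theta> :: real and T :: nat
  assumes rec: "\<And>x. 0 < x \<Longrightarrow> x < int T \<Longrightarrow> g (x+1) = 2 * cosh \<theta> * g x - g (x-1)"
  shows "k \<le> T \<Longrightarrow> g (int k) * sinh \<theta> = g 1 * sinh (\<theta> * k) - g 0 * sinh (\<theta> * (real k - 1))"
proof (induction k rule: less_induct)
  case (less k)
  show ?case
  proof (cases "k \<le> 1")
    case True
    then consider "k = 0" | "k = 1" by linarith
    then show ?thesis by cases (auto simp: algebra_simps)
  next
    case False
    define j where "j = k - 2"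
    have j: "k = Suc (Suc j)" using False unfolding j_def by simp
    have h1: "g (int (Suc j)) * sinh \<theta> = g 1 * sinh (\<theta> * real (Suc j)) - g 0 * sinh (\<theta> * (real (Suc j) - 1))"
      by (rule less.IH) (use less.prems j in auto)
    have h0: "g (int j) * sinh \<theta> = g 1 * sinh (\<theta> * real j) - g 0 * sinh (\<theta> * (real j - 1))"
      by (rule less.IH) (use less.prems j in auto)
    have r: "g (int (Suc j) + 1) = 2 * cosh \<theta> * g (int (Suc j)) - g (int (Suc j) - 1)"
      by (rule rec) (use less j in auto)
    have e1: "int (Suc j) + 1 = int k" "int (Suc j) - 1 = int j" using j by auto
    have s1: "sinh (\<theta> * real k) = 2 * cosh \<theta> * sinh (\<theta> * real (Suc j)) - sinh (\<theta> * real j)"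
      using sinh_rec[of "\<theta> * real (Suc j)" \<theta>] j by (simp add: algebra_simps)
    have s2: "sinh (\<theta> * (real k - 1)) = 2 * cosh \<theta> * sinh (\<theta> * (real (Suc j) - 1)) - sinh (\<theta> * (real j - 1))"
      using sinh_rec[of "\<theta> * (real (Suc j) - 1)" \<theta>] j by (simp add: algebra_simps)
    have "g (int k) * sinh \<theta> = 2 * cosh \<theta> * (g (int (Suc j)) * sinh \<theta>) - g (int j) * sinh \<theta>"
    proof -
      have gk: "g (int k) = 2 * cosh \<theta> * g (int (Suc j)) - g (int j)" using r e1 by simp
      show ?thesis unfolding gk by (simp add: algebra_simps)
    qed
    also have "\<dots> = g 1 * sinh (\<theta> * k) - g 0 * sinh (\<theta> * (real k - 1))"
      unfolding h1 h0 s1 s2 by (simp add: algebra_simps)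
    finally show ?thesis .
  qed
qed

lemma lin_rec_solve:
  fixes g :: "int \<Rightarrow> real" and \<theta> :: real and T :: nat
  assumes rec: "\<And>x. 0 < x \<Longrightarrow> x < int T \<Longrightarrow> g (x+1) = 2 * cosh \<theta> * g x - g (x-1)"
    and th: "\<theta> > 0" and T: "T \<ge> 1"
  shows "g 1 = (g (int T) * sinh \<theta> + g 0 * sinh (\<theta> * (real T - 1))) / sinh (\<theta> * T)"
proof -
  have "g (int T) * sinh \<theta> = g 1 * sinh (\<theta> * T) - g 0 * sinh (\<theta> * (real T - 1))"
    using lin_rec[OF rec, of T] by simp
  then have eq: "g 1 * sinh (\<theta> * T) = g (int T) * sinh \<theta> + g 0 * sinh (\<theta> * (real T - 1))"
    by linarith
  have s: "sinh (\<theta> * T) \<noteq> 0" using th T by simp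
  have "g 1 = (g 1 * sinh (\<theta> * T)) / sinh (\<theta> * T)" using s by simp
  also have "\<dots> = (g (int T) * sinh \<theta> + g 0 * sinh (\<theta> * (real T - 1))) / sinh (\<theta> * T)"
    by (simp only: eq)
  finally show ?thesis .
qed

definition GF :: "nat \<Rightarrow> (int \<Rightarrow> bool) \<Rightarrow> real \<Rightarrow> int \<Rightarrow> real" where
  "GF T P r x = (\<Sum>n. r ^ n * VW T P x n)"

lemma GF_summable:
  assumes "0 \<le> r" "r < 1/2"
  shows "summable (\<lambda>n. r ^ n * VW T P x n)"
proof (rule summable_comparison_test[where g = "\<lambda>n. (2*r)^n"])
  show "\<exists>N. \<forall>n\<ge>N. norm (r ^ n * VW T P x n) \<le> (2 * r) ^ n"
  proof (intro exI[of _ 0] allI impI)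
    fix n :: nat
    have "r ^ n * \<bar>VW T P x n\<bar> \<le> r ^ n * 2 ^ n"
      using VW_le[of T P x n] assms by (intro mult_left_mono) auto
    then show "norm (r ^ n * VW T P x n) \<le> (2 * r) ^ n"
      using assms by (simp add: abs_mult power_mult_distrib mult.commute)
  qed
  show "summable (\<lambda>n. (2 * r) ^ n)" using assms by (intro summable_geometric) auto
qed

lemma GF_sums: "0 \<le> r \<Longrightarrow> r < 1/2 \<Longrightarrow> (\<lambda>n. r ^ n * VW T P x n) sums GF T P r x"
  unfolding GF_def using GF_summable by (rule summable_sums)

lemma GF_dvd:
  assumes "int T dvd x"
  shows "GF T P r x = (if P x then 1 else 0)"
proof -
  have fe: "(\<lambda>n. r ^ n * VW T P x n) = (\<lambda>n. if n = 0 then (if P x then 1 else 0) else 0)"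
    using assms by (auto simp: VW_def fun_eq_iff)
  show ?thesis unfolding GF_def fe by (subst suminf_finite[of "{0}"]) auto 
qed

lemma VW_0: "\<not> int T dvd x \<Longrightarrow> (\<forall>y. P y \<longrightarrow> int T dvd y) \<Longrightarrow> VW T P x 0 = 0"
  by (auto simp: VW_def cW_def Wset_def srw_paths_def Spos_def)

lemma GF_rec:
  assumes "0 \<le> r" "r < 1/2" "\<not> int T dvd x" "\<forall>y. P y \<longrightarrow> int T dvd y"
  shows "GF T P r x = r * (GF T P r (x+1) + GF T P r (x-1))"
proof -
  have "(\<lambda>n. r * (r ^ n * VW T P (x+1) n) + r * (r ^ n * VW T P (x-1) n)) sums
        (r * GF T P r (x+1) + r * GF T P r (x-1))"
    by (intro sums_add sums_mult GF_sums assms)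
  moreover have "(\<lambda>n. r * (r ^ n * VW T P (x+1) n) + r * (r ^ n * VW T P (x-1) n)) =
       (\<lambda>n. r ^ Suc n * VW T P x (Suc n))"
    using assms(3) by (auto simp: fun_eq_iff VW_def cW_Suc algebra_simps)
  ultimately have "(\<lambda>n. r ^ Suc n * VW T P x (Suc n)) sums (r * GF T P r (x+1) + r * GF T P r (x-1))"
    by simp
  then have "(\<lambda>n. r ^ n * VW T P x n) sums (r * GF T P r (x+1) + r * GF T P r (x-1) + r^0 * VW T P x 0)"
    by (rule sums_Suc)
  then show ?thesis using VW_0[OF assms(3,4)] unfolding GF_def
    by (simp add: sums_iff algebra_simps)
qed

lemma Qseries_sums:
  assumes "0 \<le> r" "r < 1/2"
  shows "(\<lambda>n. (2*r)^n * (if n = 0 then 0 else cW T P 0 n / 2^n)) sums (r * (GF T P r 1 + GF T P r (-1)))"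
proof -
  define f where "f = (\<lambda>n. (2*r)^n * (if n = 0 then 0 else cW T P 0 n / 2^n))"
  have "(\<lambda>n. r * (r ^ n * VW T P (0+1) n) + r * (r ^ n * VW T P (0-1) n)) sums
        (r * GF T P r (0+1) + r * GF T P r (0-1))"
    by (intro sums_add sums_mult GF_sums assms)
  moreover have "(\<lambda>n. r * (r ^ n * VW T P (0+1) n) + r * (r ^ n * VW T P (0-1) n)) = (\<lambda>n. f (Suc n))"
  proof
    fix n
    have "f (Suc n) = r ^ Suc n * (VW T P 1 n + VW T P (-1) n)"
      unfolding f_def by (simp add: cW_Suc[of T P 0] power_mult_distrib)
    then show "r * (r ^ n * VW T P (0+1) n) + r * (r ^ n * VW T P (0-1) n) = f (Suc n)"
      by (simp add: algebra_simps)
  qed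
  ultimately have "(\<lambda>n. f (Suc n)) sums (r * (GF T P r 1 + GF T P r (-1)))"
    by (simp add: algebra_simps)
  from sums_Suc[OF this] have "f sums (r * (GF T P r 1 + GF T P r (-1)) + f 0)" .
  moreover have "f 0 = 0" by (simp add: f_def)
  ultimately have "f sums (r * (GF T P r 1 + GF T P r (-1)))" by simp
  then show ?thesis by (simp only: f_def)
qed



lemma GF_pm1:
  fixes T :: nat and \<theta> :: real
  defines "r \<equiv> 1 / (2 * cosh \<theta>)"
  assumes T: "T \<ge> 1" and th: "\<theta> > 0" and P: "\<forall>y. P y \<longrightarrow> int T dvd y"
  shows "GF T P r 1 = (GF T P r (int T) * sinh \<theta> + GF T P r 0 * sinh (\<theta> * (real T - 1))) / sinh (\<theta> * T)"
    and "GF T P r (-1) = (GF T P r (- int T) * sinh \<theta> + GF T P r 0 * sinh (\<theta> * (real T - 1))) / sinh (\<theta> * T)"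
proof -
  have c: "cosh \<theta> \<ge> 1" by (rule cosh_real_ge_1)
  have c1: "cosh \<theta> > 1" using cosh_real_strict_mono[of 0 \<theta>] th by simp
  have r0: "0 \<le> r" "r < 1/2" using c1 by (auto simp: r_def field_simps)
  have rec: "GF T P r (x+1) = 2 * cosh \<theta> * GF T P r x - GF T P r (x-1)" if "\<not> int T dvd x" for x
  proof -
    have "GF T P r x = r * (GF T P r (x+1) + GF T P r (x-1))" by (rule GF_rec[OF r0 that P])
    then have "2 * cosh \<theta> * GF T P r x = GF T P r (x+1) + GF T P r (x-1)"
      using c by (simp add: r_def field_simps)
    then show ?thesis by simp
  qed
  have nd: "\<not> int T dvd x" if "0 < x" "x < int T" for x :: int
    using that zdvd_imp_le by fastforce
  show "GF T P r 1 = (GF T P r (int T) * sinh \<theta> + GF T P r 0 * sinh (\<theta> * (real T - 1))) / sinh (\<theta> * T)"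
    by (rule lin_rec_solve[OF _ th T]) (intro rec nd; assumption)
  have "(\<lambda>x. GF T P r (-x)) 1 = ((\<lambda>x. GF T P r (-x)) (int T) * sinh \<theta> + (\<lambda>x. GF T P r (-x)) 0 * sinh (\<theta> * (real T - 1))) / sinh (\<theta> * T)"
  proof (rule lin_rec_solve[OF _ th T])
    fix x :: int assume "0 < x" "x < int T"
    then have ndx: "\<not> int T dvd (-x)" using nd by simp
    have eqs: "-(x+1) = -x - 1" "-(x-1) = -x + 1" by simp_all
    from rec[OF ndx] show "GF T P r (- (x + 1)) = 2 * cosh \<theta> * GF T P r (- x) - GF T P r (- (x - 1))"
      by (simp only: eqs)
  qed
  then show "GF T P r (-1) = (GF T P r (- int T) * sinh \<theta> + GF T P r 0 * sinh (\<theta> * (real T - 1))) / sinh (\<theta> * T)"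
    by simp
qed

lemma Qseries_theta:
  fixes T :: nat and \<theta> :: real
  assumes T: "T \<ge> 1" and th: "\<theta> > 0" and P: "\<forall>y. P y \<longrightarrow> int T dvd y"
  shows "(\<lambda>n. exp (- ln (cosh \<theta>) * real n) * (if n = 0 then 0 else cW T P 0 n / 2^n)) sums
     ((GF T P (1 / (2 * cosh \<theta>)) 1 + GF T P (1 / (2 * cosh \<theta>)) (-1)) / (2 * cosh \<theta>))"
proof -
  define r where "r = 1 / (2 * cosh \<theta>)"
  have c: "cosh \<theta> \<ge> 1" by (rule cosh_real_ge_1)
  have c1: "cosh \<theta> > 1" using cosh_real_strict_mono[of 0 \<theta>] th by simp
  have r0: "0 \<le> r" "r < 1/2" using c1 by (auto simp: r_def field_simps)
  have e: "exp (- ln (cosh \<theta>) * real n) = (2*r)^n" for n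
  proof -
    have "exp (- ln (cosh \<theta>) * real n) = exp (ln (cosh \<theta>) * real n) powr (-1)"
      by (simp add: powr_def)
    also have "exp (ln (cosh \<theta>) * real n) = cosh \<theta> ^ n"
    proof -
      have "exp (ln (cosh \<theta>) * real n) = exp (real n * ln (cosh \<theta>))" by (simp add: mult.commute)
      also have "\<dots> = exp (ln (cosh \<theta>)) ^ n" by (rule exp_of_nat_mult)
      finally show ?thesis by simp
    qed
    finally show ?thesis using c by (simp add: r_def powr_minus power_one_over inverse_eq_divide)
  qed
  show ?thesis using Qseries_sums[OF r0, of T P] unfolding e by (simp add: r_def)
qed

lemma qT_cW: "qT T j n = (if n = 0 then 0 else cW T (\<lambda>z. z = j * int T) 0 n / 2^n)"
  by (simp add: qT_def cW_def Wset_def)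

lemma ptau_cW: "ptau T n = (if n = 0 then 0 else cW T (\<lambda>z. int T dvd z) 0 n / 2^n)"
  by (simp add: ptau_def cW_def Wset_def)

lemma series_values:
  fixes T :: nat and \<theta> :: real
  assumes T: "T \<ge> 1" and th: "\<theta> > 0"
  shows "(\<lambda>n. exp (- ln (cosh \<theta>) * real n) * qT T 1 n) sums (sinh \<theta> / (2 * cosh \<theta> * sinh (\<theta> * T)))"
    and "(\<lambda>n. exp (- ln (cosh \<theta>) * real n) * qT T 0 n) sums (sinh (\<theta> * (real T - 1)) / (cosh \<theta> * sinh (\<theta> * T)))"
    and "(\<lambda>n. exp (- ln (cosh \<theta>) * real n) * ptau T n) sums ((sinh \<theta> + sinh (\<theta> * (real T - 1))) / (cosh \<theta> * sinh (\<theta> * T)))"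
proof -
  define r where "r = 1 / (2 * cosh \<theta>)"
  have c: "cosh \<theta> \<ge> 1" by (rule cosh_real_ge_1)
  have nT: "- int T \<noteq> int T" using T by simp
  have nT0: "int T \<noteq> 0" using T by simp
  {
    let ?P = "\<lambda>z. z = 1 * int T"
    have P: "\<forall>y. ?P y \<longrightarrow> int T dvd y" by simp
    have g1: "GF T ?P r 1 = sinh \<theta> / sinh (\<theta> * T)"
      using GF_pm1(1)[OF T th P] GF_dvd[of T "int T" ?P r] GF_dvd[of T 0 ?P r] nT0 unfolding r_def by simp
    have g2: "GF T ?P r (-1) = 0"
      using GF_pm1(2)[OF T th P] GF_dvd[of T "- int T" ?P r] GF_dvd[of T 0 ?P r] nT nT0 unfolding r_def by simp
    show "(\<lambda>n. exp (- ln (cosh \<theta>) * real n) * qT T 1 n) sums (sinh \<theta> / (2 * cosh \<theta> * sinh (\<theta> * T)))"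
      using Qseries_theta[OF T th P] unfolding qT_cW r_def[symmetric] g1 g2 by (simp add: mult_ac)
  }
  {
    let ?P = "\<lambda>z. z = 0 * int T"
    have P: "\<forall>y. ?P y \<longrightarrow> int T dvd y" by simp
    have g1: "GF T ?P r 1 = sinh (\<theta> * (real T - 1)) / sinh (\<theta> * T)"
      using GF_pm1(1)[OF T th P] GF_dvd[of T "int T" ?P r] GF_dvd[of T 0 ?P r] nT0 unfolding r_def by simp
    have g2: "GF T ?P r (-1) = sinh (\<theta> * (real T - 1)) / sinh (\<theta> * T)"
      using GF_pm1(2)[OF T th P] GF_dvd[of T "- int T" ?P r] GF_dvd[of T 0 ?P r] nT nT0 unfolding r_def by simp
    show "(\<lambda>n. exp (- ln (cosh \<theta>) * real n) * qT T 0 n) sums (sinh (\<theta> * (real T - 1)) / (cosh \<theta> * sinh (\<theta> * T)))"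
      using Qseries_theta[OF T th P] unfolding qT_cW r_def[symmetric] g1 g2 by (simp add: mult_ac)
  }
  {
    let ?P = "\<lambda>z. int T dvd z"
    have P: "\<forall>y. ?P y \<longrightarrow> int T dvd y" by simp
    have g1: "GF T ?P r 1 = (sinh \<theta> + sinh (\<theta> * (real T - 1))) / sinh (\<theta> * T)"
      using GF_pm1(1)[OF T th P] GF_dvd[of T "int T" ?P r] GF_dvd[of T 0 ?P r] unfolding r_def by simp
    have g2: "GF T ?P r (-1) = (sinh \<theta> + sinh (\<theta> * (real T - 1))) / sinh (\<theta> * T)"
      using GF_pm1(2)[OF T th P] GF_dvd[of T "- int T" ?P r] GF_dvd[of T 0 ?P r] unfolding r_def by simp
    have S: "(\<lambda>n. exp (- ln (cosh \<theta>) * real n) * ptau T n) sums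
       (((sinh \<theta> + sinh (\<theta> * (real T - 1))) / sinh (\<theta> * T) + (sinh \<theta> + sinh (\<theta> * (real T - 1))) / sinh (\<theta> * T)) / (2 * cosh \<theta>))"
      using Qseries_theta[OF T th P] unfolding ptau_cW r_def[symmetric] g1 g2 .
    have sT: "sinh (\<theta> * T) \<noteq> 0" using T th by simp
    have "(((sinh \<theta> + sinh (\<theta> * (real T - 1))) / sinh (\<theta> * T) + (sinh \<theta> + sinh (\<theta> * (real T - 1))) / sinh (\<theta> * T)) / (2 * cosh \<theta>))
       = ((sinh \<theta> + sinh (\<theta> * (real T - 1))) / (cosh \<theta> * sinh (\<theta> * T)))"
      using sT by (simp add: field_simps)
    with S show "(\<lambda>n. exp (- ln (cosh \<theta>) * real n) * ptau T n) sums ((sinh \<theta> + sinh (\<theta> * (real T - 1))) / (cosh \<theta> * sinh (\<theta> * T)))"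
      by simp
  }
qed



lemma Qtau_identity:
  fixes \<theta> :: real and T :: nat
  assumes "\<theta> > 0" "T \<ge> 1"
  shows "(sinh \<theta> + sinh (\<theta> * (real T - 1))) / (cosh \<theta> * sinh (\<theta> * T)) = 1 - tanh \<theta> * tanh (\<theta> * T / 2)"
proof -
  define A where "A = \<theta> * T / 2"
  have A: "A > 0" using assms by (simp add: A_def)
  have e1: "\<theta> * T = 2 * A" by (simp add: A_def)
  have e2: "\<theta> * (real T - 1) = 2 * A - \<theta>" by (simp add: A_def algebra_simps)
  have sA: "sinh A > 0" using A by simp
  have cA: "cosh A > 0" by simp
  have c: "cosh \<theta> > 0" by simp
  have "sinh (2*A - \<theta>) = 2 * sinh A * cosh A * cosh \<theta> - (cosh A ^ 2 + sinh A ^ 2) * sinh \<theta>"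
    by (simp add: sinh_diff sinh_double cosh_double)
  moreover have "cosh A ^ 2 = sinh A ^ 2 + 1" by (rule cosh_square_eq)
  ultimately have s: "sinh (2*A - \<theta>) = 2 * sinh A * cosh A * cosh \<theta> - (2 * sinh A ^ 2 + 1) * sinh \<theta>"
    by simp
  show ?thesis unfolding e1 e2 s sinh_double tanh_def A_def[symmetric]
    using sA cA c by (simp add: field_simps power2_eq_square)
qed

definition kfun :: "nat \<Rightarrow> real \<Rightarrow> real" where
  "kfun T \<theta> = tanh \<theta> * tanh (\<theta> * T / 2)"

lemma kfun_strict_mono:
  assumes "0 < a" "a < b" "T \<ge> 1"
  shows "kfun T a < kfun T b"
proof -
  have "tanh a < tanh b" using assms by simp
  moreover have "tanh (a * T / 2) < tanh (b * T / 2)" using assms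
    by (simp add: divide_strict_right_mono mult_strict_right_mono)
  moreover have "tanh a > 0" "tanh (a * T / 2) > 0" using assms by simp_all
  ultimately show ?thesis unfolding kfun_def
    by (meson le_less_trans mult_strict_mono less_imp_le)
qed

lemma kfun_le_tanh:
  assumes "\<theta> > 0" shows "kfun T \<theta> \<le> tanh \<theta>"
proof -
  have "tanh (\<theta> * T / 2) \<le> 1" using tanh_real_lt_1 less_imp_le by blast
  moreover have "tanh \<theta> \<ge> 0" using assms by simp
  ultimately show ?thesis unfolding kfun_def by (simp add: mult_left_le)
qed

lemma theta_exists:
  fixes t :: real
  assumes "0 < t" "t < 1" "T \<ge> 2"
  shows "\<exists>\<theta>>0. kfun T \<theta> = t"
proof -
  have "sqrt t < 1" using assms by simp
  then have "eventually (\<lambda>x. tanh x > sqrt t) at_top"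
    using tanh_real_at_top order_tendstoD(1) by blast
  then obtain x0 where x0: "\<And>x. x \<ge> x0 \<Longrightarrow> tanh x > sqrt t" by (auto simp: eventually_at_top_linorder)
  define b where "b = max x0 1"
  have b: "b > 0" "tanh b > sqrt t" using x0[of b] by (auto simp: b_def)
  have "tanh (b * T / 2) \<ge> tanh b" using b assms by simp
  then have "kfun T b \<ge> tanh b * tanh b" unfolding kfun_def using b
    by (intro mult_left_mono) (auto intro: less_imp_le)
  moreover have "tanh b * tanh b > sqrt t * sqrt t" using b assms
    by (intro mult_strict_mono) auto
  ultimately have kb: "kfun T b \<ge> t" using assms by simp
  have "continuous_on {0..b} (kfun T)" unfolding kfun_def
    by (intro continuous_intros) auto
  then obtain x where x: "0 \<le> x" "x \<le> b" "kfun T x = t"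
    using IVT'[of "kfun T" 0 t b] kb b assms by (auto simp: kfun_def)
  have "x \<noteq> 0" using x assms by (auto simp: kfun_def)
  then show ?thesis using x by (intro exI[of _ x]) auto
qed

lemma ptau_nonneg: "ptau T n \<ge> 0" by (simp add: ptau_def)

lemma phi_eq:
  fixes \<delta> \<theta> :: real and T :: nat
  assumes d: "\<delta> > 0" and T: "T \<ge> 2" and th: "\<theta> > 0" and k: "kfun T \<theta> = 1 - exp (- \<delta>)"
  shows "phi \<delta> T = ln (cosh \<theta>)"
proof -
  have T1: "T \<ge> 1" using T by simp
  have ser: "(\<lambda>n. exp (- ln (cosh \<psi>) * real n) * ptau T n) sums (1 - kfun T \<psi>)" if "\<psi> > 0" for \<psi>
    using series_values(3)[OF T1 that] Qtau_identity[OF that T1] by (simp add: kfun_def)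
  have ed: "exp (- \<delta>) < 1" using d by simp
  show ?thesis unfolding phi_def
  proof (rule the_equality)
    show "(\<lambda>n. exp (- ln (cosh \<theta>) * real n) * ptau T n) sums exp (- \<delta>)"
      using ser[OF th] k by simp
  next
    fix l assume L: "(\<lambda>n. exp (- l * real n) * ptau T n) sums exp (- \<delta>)"
    show "l = ln (cosh \<theta>)"
    proof (cases "l > 0")
      case True
      define \<theta>' where "\<theta>' = arcosh (exp l)"
      have el: "exp l > 1" using True by simp
      have c': "cosh \<theta>' = exp l" using el by (simp add: \<theta>'_def)
      have th': "\<theta>' > 0" using el by (simp add: \<theta>'_def)
      have "(\<lambda>n. exp (- l * real n) * ptau T n) sums (1 - kfun T \<theta>')"
        using ser[OF th'] c' by simp
      with L have "kfun T \<theta>' = kfun T \<theta>" using k sums_unique2 by fastforce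
      then have "\<theta>' = \<theta>" using kfun_strict_mono[OF th' _ T1] kfun_strict_mono[OF th _ T1]
        by (metis linorder_neqE_linordered_idom order_less_irrefl)
      then show ?thesis using c' by simp
    next
      case False
      have "eventually (\<lambda>x. tanh x < 1 - exp (- \<delta>)) (at_right 0)"
      proof -
        have "(tanh \<longlongrightarrow> tanh 0) (at_right (0::real))"
          by (intro tendsto_intros) auto
        then show ?thesis using ed by (intro order_tendstoD(2)) auto
      qed
      then obtain b where b: "b > 0" "\<And>y. y > 0 \<Longrightarrow> y < b \<Longrightarrow> tanh y < 1 - exp (- \<delta>)"
        by (auto simp: eventually_at_right_field)
      define \<psi> where "\<psi> = b / 2"
      have v: "\<psi> > 0" "tanh \<psi> < 1 - exp (- \<delta>)" using b by (auto simp: \<psi>_def)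
      have S: "(\<lambda>n. exp (- ln (cosh \<psi>) * real n) * ptau T n) sums (1 - kfun T \<psi>)" by (rule ser[OF v(1)])
      have cv: "cosh \<psi> \<ge> 1" by (rule cosh_real_ge_1)
      have "1 - kfun T \<psi> \<le> exp (- \<delta>)"
      proof (rule sums_le[OF _ S L])
        fix n
        have "- ln (cosh \<psi>) * real n \<le> - l * real n"
        proof -
          have h: "ln (cosh \<psi>) \<ge> 0" using cv by simp
          have "l \<le> ln (cosh \<psi>)" using h False by linarith
          then show ?thesis by (intro mult_right_mono) simp_all
        qed
        then show "exp (- ln (cosh \<psi>) * real n) * ptau T n \<le> exp (- l * real n) * ptau T n"
          using ptau_nonneg by (intro mult_right_mono) auto
      qed
      moreover have "kfun T \<psi> \<le> tanh \<psi>" by (rule kfun_le_tanh[OF v(1)])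
      ultimately show ?thesis using v by linarith
    qed
  qed
qed



lemma c_delta_props:
  assumes d: "\<delta> > 0"
  shows "tanh (c_delta \<delta>) = 1 - exp (- \<delta>)" "c_delta \<delta> > 0"
proof -
  define u where "u = 2 - exp (- \<delta>)"
  have ed: "exp (- \<delta>) < 1" "exp (-\<delta>) > 0" using d by auto
  have u: "u > 1" using ed by (simp add: u_def)
  have cd: "c_delta \<delta> = \<delta>/2 + ln u / 2" unfolding c_delta_def u_def[symmetric] using u by (simp add: ln_sqrt)
  have "exp (- 2 * c_delta \<delta>) = exp (- \<delta>) * exp (- ln u)" unfolding cd by (simp add: exp_add[symmetric] algebra_simps)
  also have "\<dots> = exp (- \<delta>) / u" using u by (simp add: exp_minus inverse_eq_divide)
  finally have e: "exp (- 2 * c_delta \<delta>) = exp (- \<delta>) / u" .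
  have "(1 - exp (- \<delta>) / u) / (1 + exp (- \<delta>) / u) = (u - exp (- \<delta>)) / (u + exp (- \<delta>))"
  proof -
    have ue: "u + exp (- \<delta>) > 0" using u ed(2) by linarith
    have a1: "1 - exp (- \<delta>) / u = (u - exp (- \<delta>)) / u" using u by (simp add: diff_divide_distrib)
    have a2: "1 + exp (- \<delta>) / u = (u + exp (- \<delta>)) / u" using u by (simp add: add_divide_distrib)
    show ?thesis unfolding a1 a2 using u ue by simp
  qed
  also have "\<dots> = 1 - exp (- \<delta>)" by (simp add: u_def)
  finally show "tanh (c_delta \<delta>) = 1 - exp (- \<delta>)" unfolding tanh_real_altdef e .
  have "ln u > 0" using u by simp
  then show "c_delta \<delta> > 0" unfolding cd using d by linarith
qed

lemma one_minus_tanh_le: "1 - tanh (x::real) \<le> 2 * exp (- 2 * x)"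
proof -
  define e where "e = exp (- 2 * x)"
  have p: "e > 0" by (simp add: e_def)
  have "1 - tanh x = 1 - (1 - e) / (1 + e)" unfolding tanh_real_altdef e_def ..
  also have "\<dots> = 2 * e / (1 + e)" using p by (simp add: field_simps)
  also have "\<dots> \<le> 2 * e" using p by (simp add: divide_le_eq)
  finally show ?thesis by (simp add: e_def)
qed

lemma theta_bound:
  fixes T :: nat and \<theta> c t :: real
  assumes T: "T \<ge> 2" and th: "\<theta> > 0" and k: "kfun T \<theta> = t" and c: "c > 0" "tanh c = t"
    and t: "0 < t" "t < 1" and small: "2 * exp (- real T * c) \<le> (1 - t) / 2"
  shows "real T * (\<theta> - c) \<le> (1 + 2 / (1 - t)) / c" and "c \<le> \<theta>"
proof -
  define y where "y = tanh \<theta>"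
  have y: "0 < y" "y < 1" using th tanh_real_lt_1 by (auto simp: y_def)
  have kk: "y * tanh (\<theta> * T / 2) = t" using k by (simp add: kfun_def y_def)
  have tl: "tanh (\<theta> * T / 2) < 1" by (rule tanh_real_lt_1)
  have "y * tanh (\<theta> * T / 2) < y * 1" using y tl by (intro mult_strict_left_mono) auto
  then have "t < y" using kk by simp
  then have "tanh c < tanh \<theta>" using c by (simp add: y_def)
  then have ct: "c < \<theta>" by simp
  then show "c \<le> \<theta>" by simp
  have "tanh (c * T / 2) \<le> tanh (\<theta> * T / 2)" using ct T
    by (simp add: divide_right_mono mult_right_mono)
  have ty: "y - t = y * (1 - tanh (\<theta> * T / 2))" using kk by (simp add: algebra_simps)
  also have "\<dots> \<le> 1 * (1 - tanh (c * T / 2))"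
    using y tl \<open>tanh (c * T / 2) \<le> tanh (\<theta> * T / 2)\<close> by (intro mult_mono) auto
  also have "\<dots> \<le> 2 * exp (- real T * c)"
    using one_minus_tanh_le[of "c * T / 2"] by (simp add: mult.commute)
  finally have yt: "y - t \<le> 2 * exp (- real T * c)" .
  have ytp: "0 \<le> y - t" using \<open>t < y\<close> by simp
  have "y - t \<le> (1 - t) / 2" using yt small by (rule order_trans)
  then have y2: "1 - y \<ge> (1 - t) / 2" by (simp add: field_simps)
  have th_eq: "\<theta> = ln ((1 + y) / (1 - y)) / 2" using artanh_tanh_real[of \<theta>] by (simp add: artanh_def y_def)
  have c_eq: "c = ln ((1 + t) / (1 - t)) / 2" using artanh_tanh_real[of c] c by (simp add: artanh_def)
  have "ln ((1 + y) / (1 - y)) - ln ((1 + t) / (1 - t)) = ln ((1 + y) / (1 + t)) + ln ((1 - t) / (1 - y))"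
    using y t by (simp add: ln_div)
  also have "\<dots> \<le> ((1 + y) / (1 + t) - 1) + ((1 - t) / (1 - y) - 1)"
    using y t by (intro add_mono ln_le_minus_one) auto
  also have "(1 + y) / (1 + t) - 1 = (y - t) / (1 + t)" using t by (simp add: field_simps)
  also have "(1 - t) / (1 - y) - 1 = (y - t) / (1 - y)" using y by (simp add: field_simps)
  also have "(y - t) / (1 + t) \<le> (y - t)" using ytp t by (simp add: divide_le_eq mult_le_cancel_left1)
  also have "(y - t) / (1 - y) \<le> (y - t) / ((1 - t) / 2)" using ytp y2 t
    by (intro divide_left_mono) auto
  finally have "2 * (\<theta> - c) \<le> (y - t) * (1 + 2 / (1 - t))" unfolding th_eq c_eq
    by (simp add: algebra_simps)
  also have "\<dots> \<le> 2 * exp (- real T * c) * (1 + 2 / (1 - t))"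
    using yt t by (intro mult_right_mono) auto
  finally have d1: "\<theta> - c \<le> exp (- real T * c) * (1 + 2 / (1 - t))" by simp
  have "real T * exp (- real T * c) \<le> 1 / c"
  proof -
    have "1 + real T * c \<le> exp (real T * c)" by (rule exp_ge_add_one_self)
    then have "real T * c \<le> exp (real T * c)" by linarith
    then have "real T * c * exp (- real T * c) \<le> 1" by (simp add: exp_minus field_simps)
    then show ?thesis using c by (simp add: field_simps)
  qed
  have "real T * (\<theta> - c) \<le> real T * (exp (- real T * c) * (1 + 2 / (1 - t)))"
    using d1 by (intro mult_left_mono) auto
  also have "\<dots> = (real T * exp (- real T * c)) * (1 + 2 / (1 - t))" by simp
  also have "\<dots> \<le> (1 / c) * (1 + 2 / (1 - t))"
    using \<open>real T * exp (- real T * c) \<le> 1 / c\<close> t by (intro mult_right_mono) auto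
  finally show "real T * (\<theta> - c) \<le> (1 + 2 / (1 - t)) / c" by simp
qed

lemma sigma_lower:
  fixes T :: nat and \<theta> c t K :: real
  assumes T: "T \<ge> 2" and th: "\<theta> > 0" and k: "kfun T \<theta> = t" and c: "c \<le> \<theta>" "tanh c = t"
    and t: "0 < t" and K: "real T * (\<theta> - c) \<le> K"
  shows "exp \<delta> * sinh \<theta> / (cosh \<theta> * sinh (\<theta> * T)) \<ge> 2 * exp \<delta> * t * exp (- K) * exp (- real T * c)"
proof -
  have "sinh (\<theta> * T) \<le> exp (\<theta> * T) / 2" unfolding sinh_field_def by (simp add: divide_right_mono)
  have sp: "sinh (\<theta> * T) > 0" using T th by simp
  have tt: "tanh \<theta> \<ge> t" using c tanh_real_le_iff by metis
  have "2 * t * exp (- K) * exp (- real T * c) = 2 * t * exp (- (K + real T * c))" by (simp add: exp_add[symmetric] algebra_simps)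
  also have "\<dots> \<le> 2 * t * exp (- (\<theta> * T))"
    using K t by (intro mult_left_mono) (auto simp: algebra_simps)
  also have "\<dots> = t / (exp (\<theta> * T) / 2)" by (simp add: exp_minus field_simps)
  also have "\<dots> \<le> t / sinh (\<theta> * T)"
    using sp t \<open>sinh (\<theta> * T) \<le> exp (\<theta> * T) / 2\<close> by (intro divide_left_mono) auto
  also have "\<dots> \<le> tanh \<theta> / sinh (\<theta> * T)" using tt sp by (simp add: divide_right_mono)
  also have "\<dots> = sinh \<theta> / (cosh \<theta> * sinh (\<theta> * T))" by (simp add: tanh_def)
  finally have "2 * t * exp (- K) * exp (- real T * c) \<le> sinh \<theta> / (cosh \<theta> * sinh (\<theta> * T))" .
  then have "exp \<delta> * (2 * t * exp (- K) * exp (- real T * c)) \<le> exp \<delta> * (sinh \<theta> / (cosh \<theta> * sinh (\<theta> * T)))"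
    by (intro mult_left_mono) auto
  then show ?thesis by (simp add: algebra_simps)
qed



lemma nn_slice:
  fixes f :: "nat \<times> int \<Rightarrow> real"
  assumes nn: "\<And>x. f x \<ge> 0" and s: "(\<lambda>n. f (n, j)) sums s"
  shows "(\<integral>\<^sup>+x. ennreal (f x) * indicator {x. snd x = j} x \<partial>count_space UNIV) = ennreal s"
proof -
  have "(\<integral>\<^sup>+x. ennreal (f x) * indicator {x. snd x = j} x \<partial>count_space UNIV) =
        (\<integral>\<^sup>+x. ennreal (f x) \<partial>count_space {x. snd x = j})"
    by (rule nn_integral_count_space_indicator[symmetric]) simp
  also have "\<dots> = (\<integral>\<^sup>+n. ennreal (f (n, j)) \<partial>count_space UNIV)"
  proof (rule nn_integral_bij_count_space[symmetric, where g = "\<lambda>n. (n, j)"])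
    show "bij_betw (\<lambda>n. (n, j)) UNIV {x. snd x = j}"
      by (auto simp: bij_betw_def inj_on_def image_def)
  qed
  also have "\<dots> = (\<Sum>n. ennreal (f (n, j)))" by (rule nn_integral_count_space_nat)
  also have "\<dots> = ennreal s" by (rule suminf_ennreal_eq) (use nn s in auto)
  finally show ?thesis .
qed

lemma nn_total:
  fixes f :: "nat \<times> int \<Rightarrow> real"
  assumes nn: "\<And>x. f x \<ge> 0" and s: "\<And>j. (\<lambda>n. f (n, j)) sums s j"
    and supp: "\<And>x. snd x \<notin> J \<Longrightarrow> f x = 0" and J: "finite J"
  shows "(\<integral>\<^sup>+x. ennreal (f x) \<partial>count_space UNIV) = ennreal (\<Sum>j\<in>J. s j)"
proof -
  have "(\<integral>\<^sup>+x. ennreal (f x) \<partial>count_space UNIV) =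
      (\<integral>\<^sup>+x. (\<Sum>j\<in>J. ennreal (f x) * indicator {x. snd x = j} x) \<partial>count_space UNIV)"
  proof (rule nn_integral_cong)
    fix x :: "nat \<times> int"
    show "ennreal (f x) = (\<Sum>j\<in>J. ennreal (f x) * indicator {x. snd x = j} x)"
    proof (cases "snd x \<in> J")
      case True
      have "(\<Sum>j\<in>J. ennreal (f x) * indicator {x. snd x = j} x) = (\<Sum>j\<in>{snd x}. ennreal (f x) * indicator {x. snd x = j} x)"
        using True J by (intro sum.mono_neutral_right) (auto simp: indicator_def)
      then show ?thesis by simp
    next
      case False then show ?thesis using supp[OF False] by (simp add: indicator_def)
    qed
  qed
  also have "\<dots> = (\<Sum>j\<in>J. \<integral>\<^sup>+x. ennreal (f x) * indicator {x. snd x = j} x \<partial>count_space UNIV)"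
    by (rule nn_integral_sum) simp
  also have "\<dots> = (\<Sum>j\<in>J. ennreal (s j))" using nn_slice[OF nn s] by simp
  also have "\<dots> = ennreal (\<Sum>j\<in>J. s j)"
  proof (rule sum_ennreal)
    fix j show "0 \<le> s j" using sums_le[OF _ sums_zero s[of j]] nn by auto
  qed
  finally show ?thesis .
qed

definition fstep :: "real \<Rightarrow> nat \<Rightarrow> nat \<times> int \<Rightarrow> real" where
  "fstep \<delta> T = (\<lambda>(n, j). if n \<ge> 1 \<and> j \<in> {-1, 0, 1}
     then exp \<delta> * qT T \<bar>j\<bar> n * exp (- phi \<delta> T * real n) else 0)"

lemma step_pmf_fstep: "step_pmf \<delta> T = embed_pmf (fstep \<delta> T)"
  by (simp add: step_pmf_def fstep_def)

lemma qT_nonneg: "qT T j n \<ge> 0" by (simp add: qT_def)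

lemma qT_0: "qT T j 0 = 0" by (simp add: qT_def)

lemma fstep_nonneg: "fstep \<delta> T x \<ge> 0"
  by (auto simp: fstep_def qT_nonneg split: prod.splits)

locale setting =
  fixes \<delta> :: real and T :: nat and \<theta> :: real
  assumes d: "\<delta> > 0" and T: "T \<ge> 2" and th: "\<theta> > 0" and k: "kfun T \<theta> = 1 - exp (- \<delta>)"
begin

definition "Aval = exp \<delta> * (sinh \<theta> / (2 * cosh \<theta> * sinh (\<theta> * T)))"
definition "Bval = exp \<delta> * (sinh (\<theta> * (real T - 1)) / (cosh \<theta> * sinh (\<theta> * T)))"
definition "sval j = (if j = 1 \<or> j = -1 then Aval else if j = 0 then Bval else 0)"

lemma th_pos: "\<theta> > 0" using th .
lemma T1: "T \<ge> 1" using T by simp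

lemma phi: "phi \<delta> T = ln (cosh \<theta>)" by (rule phi_eq[OF d T th k])

lemma fstep_sums: "(\<lambda>n. fstep \<delta> T (n, j)) sums sval j"
proof -
  have q: "qT T \<bar>j\<bar> n * exp (- phi \<delta> T * real n) = exp (- ln (cosh \<theta>) * real n) * qT T \<bar>j\<bar> n" for n
    by (simp add: phi)
  have fe: "(\<lambda>n. fstep \<delta> T (n, j)) = (\<lambda>n. if j \<in> {-1,0,1} then exp \<delta> * (exp (- ln (cosh \<theta>) * real n) * qT T \<bar>j\<bar> n) else 0)"
  proof
    fix n show "fstep \<delta> T (n, j) = (if j \<in> {-1,0,1} then exp \<delta> * (exp (- ln (cosh \<theta>) * real n) * qT T \<bar>j\<bar> n) else 0)"
      by (cases "n = 0") (auto simp: fstep_def qT_0 phi mult_ac)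
  qed
  consider "j = 1" | "j = -1" | "j = 0" | "j \<notin> {-1,0,1}" by auto
  then show ?thesis
  proof cases
    case 1 then show ?thesis unfolding fe sval_def Aval_def
      using sums_mult[OF series_values(1)[OF T1 th], of "exp \<delta>"] by simp
  next
    case 2 then show ?thesis unfolding fe sval_def Aval_def
      using sums_mult[OF series_values(1)[OF T1 th], of "exp \<delta>"] by simp
  next
    case 3 then show ?thesis unfolding fe sval_def Bval_def
      using sums_mult[OF series_values(2)[OF T1 th], of "exp \<delta>"] by simp
  next
    case 4 then show ?thesis unfolding fe sval_def by auto
  qed
qed

lemma sT: "sinh (\<theta> * T) \<noteq> 0" using th T1 by simp

lemma Aval_pos: "Aval > 0" unfolding Aval_def using th T1 by (simp add: zero_less_mult_iff)

lemma Bval_nonneg: "Bval \<ge> 0"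
proof -
  have "sinh (\<theta> * (real T - 1)) \<ge> 0" using th T by simp
  then show ?thesis unfolding Bval_def using th T1 by (simp add: zero_le_mult_iff)
qed

lemma sval_nonneg: "sval j \<ge> 0" using Aval_pos Bval_nonneg by (simp add: sval_def)

lemma AB_total: "2 * Aval + Bval = 1"
proof -
  have "2 * Aval + Bval = exp \<delta> * ((sinh \<theta> + sinh (\<theta> * (real T - 1))) / (cosh \<theta> * sinh (\<theta> * T)))"
    unfolding Aval_def Bval_def using sT by (simp add: field_simps)
  also have "\<dots> = exp \<delta> * (1 - kfun T \<theta>)" using Qtau_identity[OF th T1] by (simp add: kfun_def)
  also have "\<dots> = 1" using k by (simp add: exp_minus)
  finally show ?thesis .
qed

lemma sum_sval: "(\<Sum>j\<in>{-1,0,1::int}. sval j) = 1"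
  using AB_total by (simp add: sval_def)

lemma nn_fstep: "(\<integral>\<^sup>+x. ennreal (fstep \<delta> T x) \<partial>count_space UNIV) = 1"
  using nn_total[of "fstep \<delta> T" sval "{-1,0,1}", OF fstep_nonneg fstep_sums] sum_sval
  by (auto simp: fstep_def split: prod.splits)

lemma pmf_step: "pmf (step_pmf \<delta> T) x = fstep \<delta> T x"
  unfolding step_pmf_fstep by (rule pmf_embed_pmf[OF fstep_nonneg nn_fstep])

lemma pmf_E: "pmf (map_pmf snd (step_pmf \<delta> T)) j = sval j"
proof -
  have "ennreal (pmf (map_pmf snd (step_pmf \<delta> T)) j) = emeasure (measure_pmf (step_pmf \<delta> T)) (snd -` {j})"
    by (simp add: pmf_map measure_pmf.emeasure_eq_measure)
  also have "\<dots> = (\<integral>\<^sup>+x. indicator (snd -` {j}) x \<partial>measure_pmf (step_pmf \<delta> T))"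
    by simp
  also have "\<dots> = (\<integral>\<^sup>+x. ennreal (fstep \<delta> T x) * indicator {x. snd x = j} x \<partial>count_space UNIV)"
    unfolding nn_integral_measure_pmf pmf_step by (simp add: vimage_def)
  also have "\<dots> = ennreal (sval j)" by (rule nn_slice[OF fstep_nonneg fstep_sums])
  finally show ?thesis
    by (subst (asm) ennreal_inj) (auto simp: sval_nonneg)
qed

end



lemma char_Y:
  fixes p :: "(nat \<times> int) pmf" and s t :: real and N :: nat
  shows "char (distr (measure_pmf (map_pmf (\<lambda>f. \<Sum>i\<in>{1..N}. snd (f i)) (Pi_pmf {1..N} (0, 0) (\<lambda>_. p)))) borel
            (\<lambda>y. real_of_int y / s)) t
       = (CLINT x|measure_pmf p. iexp (t * (real_of_int (snd x) / s))) ^ N"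
proof -
  let ?P = "Pi_pmf {1..N} ((0::nat), (0::int)) (\<lambda>_. p)"
  define X where "X i f = real_of_int (snd (f i)) / s" for i and f :: "nat \<Rightarrow> nat \<times> int"
  have "distr (measure_pmf (map_pmf (\<lambda>f. \<Sum>i\<in>{1..N}. snd (f i)) ?P)) borel (\<lambda>y. real_of_int y / s)
      = distr (measure_pmf ?P) borel (\<lambda>f. \<Sum>i\<in>{1..N}. X i f)"
    unfolding map_pmf_rep_eq
    by (subst distr_distr) (auto simp: comp_def X_def sum_divide_distrib)
  moreover have ind: "prob_space.indep_vars (measure_pmf ?P) (\<lambda>_. borel) X {1..N}"
  proof -
    have "prob_space.indep_vars (measure_pmf ?P) (\<lambda>_. count_space UNIV) (\<lambda>x f. f x) {1..N}"
      by (rule indep_vars_Pi_pmf) simp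
    from prob_space.indep_vars_compose2[OF measure_pmf.prob_space_axioms this, of "\<lambda>i v. real_of_int (snd v) / s" "\<lambda>_. borel"]
    show ?thesis by (simp add: X_def[abs_def])
  qed
  have comp: "char (distr (measure_pmf ?P) borel (X i)) t = (CLINT x|measure_pmf p. iexp (t * (real_of_int (snd x) / s)))"
    if "i \<in> {1..N}" for i
  proof -
    have "distr (measure_pmf ?P) borel (X i) = distr (measure_pmf (map_pmf (\<lambda>f. f i) ?P)) borel (\<lambda>v. real_of_int (snd v) / s)"
      unfolding map_pmf_rep_eq by (subst distr_distr) (auto simp: comp_def X_def[abs_def])
    also have "map_pmf (\<lambda>f. f i) ?P = p" using that by (simp add: Pi_pmf_component)
    finally show ?thesis by (simp add: char_def integral_distr)
  qed
  ultimately show ?thesis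
    using prob_space.char_distr_sum[OF measure_pmf.prob_space_axioms ind, of t] comp by simp
qed

lemma char_step:
  fixes p :: "(nat \<times> int) pmf" and a u :: real
  assumes supp: "set_pmf (map_pmf snd p) \<subseteq> {-1, 0, 1}"
    and p1: "pmf (map_pmf snd p) 1 = a / 2" and pm1: "pmf (map_pmf snd p) (-1) = a / 2"
  shows "(CLINT x|measure_pmf p. iexp (u * real_of_int (snd x))) = complex_of_real (1 - a + a * cos u)"
proof -
  let ?E = "map_pmf snd p"
  have p0: "pmf ?E 0 = 1 - a"
  proof -
    have "(\<Sum>j\<in>{-1,0,1}. pmf ?E j) = 1" by (rule sum_pmf_eq_1) (use supp in auto)
    then show ?thesis using p1 pm1 by simp
  qed
  have "(CLINT x|measure_pmf p. iexp (u * real_of_int (snd x))) = (CLINT j|measure_pmf ?E. iexp (u * real_of_int j))"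
    unfolding map_pmf_rep_eq by (simp add: integral_distr)
  also have "\<dots> = (\<Sum>j\<in>{-1,0,1}. pmf ?E j *\<^sub>R iexp (u * real_of_int j))"
    by (rule integral_measure_pmf) (use supp in auto)
  also have "\<dots> = (a/2) *\<^sub>R iexp (- u) + (1 - a) *\<^sub>R 1 + (a/2) *\<^sub>R iexp u"
    by (simp add: p0 p1 pm1)
  also have "\<dots> = complex_of_real (1 - a + a * cos u)"
  proof -
    have m: "exp (- (\<i> * complex_of_real u)) = cis (- u)" by (simp add: cis_conv_exp)
    show ?thesis by (simp add: m complex_eq_iff cis_conv_exp[symmetric] scaleR_conv_of_real)
  qed
  finally show ?thesis .
qed



lemma cos_bound4: fixes u :: real shows "\<bar>cos u - (1 - u^2/2)\<bar> \<le> u^4 / 24"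
proof -
  have A: "cmod (iexp u - (\<Sum>k\<le>3. (\<i> * complex_of_real u)^k / fact k)) \<le> \<bar>u\<bar>^(Suc 3) / fact (Suc 3)"
    by (rule iexp_approx1)
  have S: "(\<Sum>k\<le>3. (\<i> * complex_of_real u)^k / fact k) = Complex (1 - u^2/2) (u - u^3/6)"
    by (simp add: eval_nat_numeral complex_eq_iff fact_numeral power2_eq_square)
  have R: "Re (iexp u) = cos u" by (simp add: cis_conv_exp[symmetric])
  have F: "\<bar>u\<bar>^(Suc 3) / fact (Suc 3) = u^4 / 24"
  proof -
    have f: "(fact (Suc 3) :: real) = 24" by (simp add: eval_nat_numeral)
    have "\<bar>u\<bar>^(Suc 3) = u^4" by (simp add: eval_nat_numeral power_abs[symmetric] abs_mult)
    then show ?thesis using f by simp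
  qed
  have B: "cmod (iexp u - Complex (1 - u^2/2) (u - u^3/6)) \<le> u^4 / 24"
    using A unfolding S F .
  have C: "\<bar>cos u - (1 - u^2/2)\<bar> \<le> cmod (iexp u - Complex (1 - u^2/2) (u - u^3/6))"
    using abs_Re_le_cmod[of "iexp u - Complex (1 - u^2/2) (u - u^3/6)"] R by simp
  show ?thesis using B C by linarith
qed

lemma clt_real_limit:
  fixes a :: "nat \<Rightarrow> real" and t :: real
  assumes ha: "eventually (\<lambda>N. 0 < a N \<and> a N \<le> 1) sequentially"
    and hlim: "filterlim (\<lambda>N. a N * real N) at_top sequentially"
  shows "(\<lambda>N. (1 - a N + a N * cos (t / sqrt (a N * real N))) ^ N) \<longlonglongrightarrow> exp (- (t^2) / 2)"
proof -
  define w where "w N = 1 + (- (t^2) / 2) / real N" for N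
  have wlim: "(\<lambda>N. w N ^ N) \<longlonglongrightarrow> exp (- (t^2) / 2)" unfolding w_def by (rule tendsto_exp_limit_sequentially)
  have ev: "eventually (\<lambda>N. norm ((1 - a N + a N * cos (t / sqrt (a N * real N))) ^ N - w N ^ N)
       \<le> t^4 / 24 * inverse (a N * real N)) sequentially"
  proof -
    have "eventually (\<lambda>N. N \<ge> max 1 (nat \<lceil>t^2 / 4\<rceil>)) sequentially" by (rule eventually_ge_at_top)
    with ha show ?thesis
    proof eventually_elim
      case (elim N)
      then have aN: "0 < a N" "a N \<le> 1" and N1: "N \<ge> 1" and Nt: "real N \<ge> t^2/4"
        by (auto simp: nat_ceiling_le_eq)
      define u where "u = t / sqrt (a N * real N)"
      define z where "z = 1 - a N + a N * cos u"
      have Npos: "real N > 0" using N1 by simp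
      have aNp: "a N * real N > 0" using aN Npos by simp
      have u2: "u^2 = t^2 / (a N * real N)" unfolding u_def using aNp by (simp add: power_divide)
      have z1: "\<bar>z\<bar> \<le> 1"
      proof -
        have c1: "-1 \<le> cos u" "cos u \<le> 1" by simp_all
        have "a N * cos u \<le> a N * 1" using c1(2) aN by (intro mult_left_mono) auto
        moreover have "a N * (-1) \<le> a N * cos u" using c1(1) aN by (intro mult_left_mono) auto
        ultimately show ?thesis unfolding z_def using aN by (simp add: abs_le_iff)
      qed
      have w1: "\<bar>w N\<bar> \<le> 1"
      proof -
        have "t^2 / 2 / real N \<le> 2" using Nt Npos by (simp add: divide_le_eq)
        moreover have "t^2 / 2 / real N \<ge> 0" by simp
        ultimately show ?thesis unfolding w_def by (simp add: abs_le_iff)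
      qed
      have "z - w N = a N * (cos u - (1 - u^2/2))"
        unfolding z_def w_def u2 using aNp aN Npos by (simp add: field_simps)
      then have "\<bar>z - w N\<bar> \<le> a N * (u^4 / 24)"
        using cos_bound4[of u] aN by (simp add: abs_mult mult_left_mono)
      also have "a N * (u^4 / 24) = t^4 / 24 / (a N * real N^2)"
      proof -
        have "u^4 = (u^2)^2" by simp
        then show ?thesis unfolding u2 using aNp aN by (simp add: field_simps power2_eq_square eval_nat_numeral)
      qed
      finally have zw: "\<bar>z - w N\<bar> \<le> t^4 / 24 / (a N * real N^2)" .
      have "norm (z ^ N - w N ^ N) \<le> real N * norm (z - w N)"
        using norm_power_diff[of z "w N" N] z1 w1 by simp
      also have "\<dots> \<le> real N * (t^4 / 24 / (a N * real N^2))"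
        using zw by (intro mult_left_mono) auto
      also have "\<dots> = t^4 / 24 * inverse (a N * real N)"
        using Npos aN by (simp add: field_simps power2_eq_square)
      finally show ?case unfolding z_def u_def .
    qed
  qed
  have "(\<lambda>N. t^4 / 24 * inverse (a N * real N)) \<longlonglongrightarrow> t^4 / 24 * 0"
    by (intro tendsto_mult tendsto_const tendsto_inverse_0_at_top hlim)
  then have z0: "(\<lambda>N. t^4 / 24 * inverse (a N * real N)) \<longlonglongrightarrow> 0" by simp
  show ?thesis
    by (rule Lim_transform[OF wlim]) (rule Lim_null_comparison[OF ev z0])
qed



lemma std_normal_isCont_cdf: "isCont (cdf std_normal_distribution) x"
proof -
  interpret S: real_distribution std_normal_distribution by (rule real_dist_normal_dist)
  have "emeasure std_normal_distribution {x} = (\<integral>\<^sup>+y. ennreal (std_normal_density y) * indicator {x} y \<partial>lborel)"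
    by (subst emeasure_density) auto
  also have "\<dots> = 0" by (subst nn_integral_indicator_singleton) auto
  finally have "emeasure std_normal_distribution {x} = 0" .
  then have "measure std_normal_distribution {x} = 0" by (simp add: measure_def)
  then show ?thesis by (simp add: S.isCont_cdf)
qed

lemma clt_seq:
  fixes p :: "nat \<Rightarrow> (nat \<times> int) pmf" and a :: "nat \<Rightarrow> real" and x :: real
  assumes ev: "eventually (\<lambda>N. set_pmf (map_pmf snd (p N)) \<subseteq> {-1,0,1} \<and> pmf (map_pmf snd (p N)) 1 = a N / 2
      \<and> pmf (map_pmf snd (p N)) (-1) = a N / 2 \<and> a N > 0) sequentially"
    and hlim: "filterlim (\<lambda>N. a N * real N) at_top sequentially"
  shows "(\<lambda>N. measure_pmf.prob (map_pmf (\<lambda>f. \<Sum>i\<in>{1..N}. snd (f i)) (Pi_pmf {1..N} (0,0) (\<lambda>_. p N)))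
      {y. real_of_int y / sqrt (a N * real N) \<le> x}) \<longlonglongrightarrow> measure (density lborel std_normal_density) {..x}"
proof -
  define Y where "Y N = map_pmf (\<lambda>f. \<Sum>i\<in>{1..N}. snd (f i)) (Pi_pmf {1..N} ((0::nat),(0::int)) (\<lambda>_. p N))" for N
  define M where "M N = distr (measure_pmf (Y N)) borel (\<lambda>y. real_of_int y / sqrt (a N * real N))" for N
  have rd: "real_distribution (M N)" for N
    unfolding M_def by (rule prob_space.real_distribution_distr[OF measure_pmf.prob_space_axioms]) simp
  have ev2: "eventually (\<lambda>N. 0 < a N \<and> a N \<le> 1) sequentially"
    using ev
  proof eventually_elim
    case (elim N)
    have "(\<Sum>j\<in>{-1,0,1}. pmf (map_pmf snd (p N)) j) = 1" by (rule sum_pmf_eq_1) (use elim in auto)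
    then have "pmf (map_pmf snd (p N)) 0 + a N = 1" using elim by simp
    then show ?case using elim pmf_nonneg[of "map_pmf snd (p N)" 0] by linarith
  qed
  have wc: "weak_conv_m M std_normal_distribution"
  proof (rule levy_continuity[OF rd real_dist_normal_dist])
    fix t :: real
    have e: "eventually (\<lambda>N. char (M N) t = complex_of_real ((1 - a N + a N * cos (t / sqrt (a N * real N))) ^ N)) sequentially"
      using ev
    proof eventually_elim
      case (elim N)
      have ie: "(\<lambda>x. iexp (t * (real_of_int (snd x) / sqrt (a N * real N)))) = (\<lambda>x. iexp ((t / sqrt (a N * real N)) * real_of_int (snd x)))"
        by (simp add: field_simps)
      have "char (M N) t = (CLINT x|measure_pmf (p N). iexp (t * (real_of_int (snd x) / sqrt (a N * real N)))) ^ N"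
        unfolding M_def Y_def by (rule char_Y)
      also have "\<dots> = complex_of_real (1 - a N + a N * cos (t / sqrt (a N * real N))) ^ N"
        unfolding ie using elim by (subst char_step) auto
      finally show ?case by simp
    qed
    have "(\<lambda>N. complex_of_real ((1 - a N + a N * cos (t / sqrt (a N * real N))) ^ N)) \<longlonglongrightarrow> complex_of_real (exp (- (t^2) / 2))"
      by (intro tendsto_of_real clt_real_limit[OF ev2 hlim])
    then have "(\<lambda>N. char (M N) t) \<longlonglongrightarrow> complex_of_real (exp (- (t^2) / 2))"
      by (rule Lim_transform_eventually) (use e in \<open>auto elim: eventually_mono\<close>)
    then show "(\<lambda>N. char (M N) t) \<longlonglongrightarrow> char std_normal_distribution t"
      by (simp add: char_std_normal_distribution)
  qed
  then have "(\<lambda>N. cdf (M N) x) \<longlonglongrightarrow> cdf std_normal_distribution x"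
    using std_normal_isCont_cdf unfolding weak_conv_m_def weak_conv_def by blast
  moreover have "cdf (M N) x = measure_pmf.prob (Y N) {y. real_of_int y / sqrt (a N * real N) \<le> x}" for N
    unfolding cdf_def2 M_def by (subst measure_distr) (auto simp: vimage_def)
  ultimately show ?thesis unfolding Y_def cdf_def2 by simp
qed



context setting begin

lemma Q1_val: "Q1 T (phi \<delta> T) = sinh \<theta> / (2 * cosh \<theta> * sinh (\<theta> * T))"
  unfolding Q1_def phi using series_values(1)[OF T1 th] by (simp add: sums_iff)

lemma a_val: "2 * exp \<delta> * Q1 T (phi \<delta> T) = 2 * Aval"
  unfolding Q1_val Aval_def by simp

lemma E_props: "set_pmf (map_pmf snd (step_pmf \<delta> T)) \<subseteq> {-1,0,1}"
  "pmf (map_pmf snd (step_pmf \<delta> T)) 1 = (2 * exp \<delta> * Q1 T (phi \<delta> T)) / 2"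
  "pmf (map_pmf snd (step_pmf \<delta> T)) (-1) = (2 * exp \<delta> * Q1 T (phi \<delta> T)) / 2"
  "2 * exp \<delta> * Q1 T (phi \<delta> T) > 0"
  using pmf_E Aval_pos by (auto simp: a_val sval_def set_pmf_eq)

end

theorem mainTheorem16:
  fixes \<delta> :: real and T :: "nat \<Rightarrow> nat" and x :: real
  assumes "\<delta> > 0"
    and "\<And>N. even (T N)"
    and "\<And>N. T N \<le> N"
    and "filterlim T at_top sequentially"
    and "filterlim (\<lambda>N. real (T N) - ln (real N) / c_delta \<delta>) at_bot sequentially"
  shows "(\<lambda>N. measure_pmf.prob (Y_law \<delta> (T N) N)
            {y. real_of_int y / sqrt (2 * exp \<delta> * Q1 (T N) (phi \<delta> (T N)) * real N) \<le> x})
         \<longlonglongrightarrow> measure (density lborel std_normal_density) {..x}"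
proof -
  note d = assms(1)
  define t where "t = 1 - exp (- \<delta>)"
  define c where "c = c_delta \<delta>"
  have t: "0 < t" "t < 1" using d by (auto simp: t_def)
  have c: "tanh c = t" "c > 0" using c_delta_props[OF d] by (auto simp: c_def t_def)
  define K where "K = (1 + 2 / (1 - t)) / c"
  define K0 where "K0 = 2 * exp \<delta> * t * exp (- K)"
  have K0: "K0 > 0" using t by (simp add: K0_def)
  have "\<forall>N. \<exists>\<theta>. T N \<ge> 2 \<longrightarrow> \<theta> > 0 \<and> kfun (T N) \<theta> = t"
    using theta_exists[OF t] by blast
  then obtain \<theta> where thN: "\<And>N. T N \<ge> 2 \<Longrightarrow> \<theta> N > 0 \<and> kfun (T N) (\<theta> N) = t" by metis
  define a where "a N = 2 * exp \<delta> * Q1 (T N) (phi \<delta> (T N))" for N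
  have evT: "eventually (\<lambda>N. T N \<ge> 2) sequentially"
    using assms(4) by (simp add: filterlim_at_top)
  have evS: "eventually (\<lambda>N. 2 * exp (- real (T N) * c) \<le> (1 - t) / 2) sequentially"
  proof -
    have "((\<lambda>N. 2 * exp (- real (T N) * c)) \<longlongrightarrow> 2 * 0) sequentially"
    proof (intro tendsto_mult tendsto_const)
      have "filterlim (\<lambda>N. real (T N) * c) at_top sequentially"
        using c by (intro filterlim_at_top_mult_tendsto_pos[OF tendsto_const] filterlim_compose[OF filterlim_real_sequentially assms(4)]) auto
      then have "filterlim (\<lambda>N. - (real (T N) * c)) at_bot sequentially"
        by (simp add: filterlim_uminus_at_bot)
      then show "((\<lambda>N. exp (- real (T N) * c)) \<longlongrightarrow> 0) sequentially"
        using filterlim_compose[OF exp_at_bot] by simp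
    qed
    then have l0: "((\<lambda>N. 2 * exp (- real (T N) * c)) \<longlongrightarrow> 0) sequentially" by simp
    have "(0::real) < (1 - t) / 2" using t by simp
    from order_tendstoD(2)[OF l0 this] show ?thesis by (rule eventually_mono) simp
  qed
  have evP: "eventually (\<lambda>N. set_pmf (map_pmf snd (step_pmf \<delta> (T N))) \<subseteq> {-1,0,1} \<and> pmf (map_pmf snd (step_pmf \<delta> (T N))) 1 = a N / 2
      \<and> pmf (map_pmf snd (step_pmf \<delta> (T N))) (-1) = a N / 2 \<and> a N > 0) sequentially"
    using evT
  proof eventually_elim
    case (elim N)
    interpret setting \<delta> "T N" "\<theta> N" using thN[OF elim] d elim by unfold_locales (auto simp: t_def)
    show ?case using E_props by (simp add: a_def)
  qed
  have evA: "eventually (\<lambda>N. a N * real N \<ge> K0 * (real N * exp (- real (T N) * c))) sequentially"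
    using evT evS
  proof eventually_elim
    case (elim N)
    interpret setting \<delta> "T N" "\<theta> N" using thN[OF elim(1)] d elim by unfold_locales (auto simp: t_def)
    have kk: "kfun (T N) (\<theta> N) = t" using thN[OF elim(1)] by simp
    have tb: "real (T N) * (\<theta> N - c) \<le> K" "c \<le> \<theta> N"
      using theta_bound[OF elim(1) th_pos kk c(2) c(1) t elim(2)] by (simp_all add: K_def)
    have "a N \<ge> K0 * exp (- real (T N) * c)"
      using sigma_lower[OF elim(1) th_pos kk tb(2) c(1) t(1) tb(1), of \<delta>]
      unfolding a_def a_val Aval_def K0_def by (simp add: field_simps)
    then have "real N * (K0 * exp (- real (T N) * c)) \<le> real N * a N"
      by (intro mult_left_mono) auto
    then show ?case by (simp add: mult_ac)
  qed
  have lim1: "filterlim (\<lambda>N. real N * exp (- real (T N) * c)) at_top sequentially"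
  proof -
    have "filterlim (\<lambda>N. - (real (T N) - ln (real N) / c)) at_top sequentially"
      using assms(5) by (simp add: filterlim_uminus_at_top c_def)
    then have "filterlim (\<lambda>N. c * (- (real (T N) - ln (real N) / c))) at_top sequentially"
      using c by (intro filterlim_tendsto_pos_mult_at_top[OF tendsto_const]) auto
    then have F1: "filterlim (\<lambda>N. exp (c * (- (real (T N) - ln (real N) / c)))) at_top sequentially"
      by (rule filterlim_compose[OF exp_at_top])
    have F2: "eventually (\<lambda>N. exp (c * (- (real (T N) - ln (real N) / c))) = real N * exp (- real (T N) * c)) sequentially"
      using eventually_ge_at_top[of 1]
    proof eventually_elim
      case (elim N)
      have "c * (- (real (T N) - ln (real N) / c)) = ln (real N) + (- real (T N) * c)"
        using c by (simp add: field_simps)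
      moreover have "exp (ln (real N) + (- real (T N) * c)) = real N * exp (- real (T N) * c)"
        using elim by (simp only: exp_add) simp
      ultimately show ?case by simp
    qed
    show ?thesis using F1 filterlim_cong[OF refl refl F2] by simp
  qed
  have lim: "filterlim (\<lambda>N. a N * real N) at_top sequentially"
  proof (rule filterlim_at_top_mono[OF _ evA])
    show "filterlim (\<lambda>N. K0 * (real N * exp (- real (T N) * c))) at_top sequentially"
      using K0 by (intro filterlim_tendsto_pos_mult_at_top[OF tendsto_const] lim1) auto
  qed
  show ?thesis
    using clt_seq[OF evP lim, of x] unfolding Y_law_def a_def .
qed


end
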